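(* For each $L\in\{3,4,5,6\}$, the class of I$^2$-GNNs can count $L$-cycles at node level: for all node-graph pairs $(i_1,G_1),(i_2,G_2)$ with $C(L\text{-cycle},i_1,G_1)\ne C(L\text{-cycle},i_2,G_2)$, there exists an I$^2$-GNN whose node representations satisfy $h_{i_1}(G_1)\ne h_{i_2}(G_2)$.
   Context: Graphs are finite, simple, undirected, $G=(V,E)$, possibly carrying node attributes $x_v$ and edge attributes $e_{u,v}$ (a fixed constant when absent). $N(v)$ is the neighbour set of $v$. For $L\ge 3$, an $L$-cycle is a sequence of edges $(v_1,v_2),\dots,(v_L,v_{L+1})$ with $v_1,\dots,v_L$ pairwise distinct and $v_{L+1}=v_1$; two cycles are identified when their edge sets coincide; $C(L\text{-cycle},i,G)$ is the number of inequivalent $L$-cycles containing node $i$. A class $\mathcal F$ of functions on node-graph pairs can count $S$ at node level if for all $(i_1,G_1),(i_2,G_2)$ with $C(S,i_1,G_1)\ne C(S,i_2,G_2)$ there is $f\in\mathcal F$ with $f(i_1,G_1)\ne f(i_2,G_2)$. I$^2$-GNNs. An I$^2$-GNN is specified by an integer $K\ge1$, $T$, arbitrary functions $M_t$ (values in some $\mathbb R^{d_t}$), $U_t$, and arbitrary readouts $R_{\text{edge}},R_{\text{node}}$ on finite multisets. For each root $i\in V$ let $(V_i,E_i)$ be the subgraph of $G$ induced by nodes at shortest-path distance at most $K$ from $i$, and $N_i(k)=\{l\in V_i:(k,l)\in E_i\}$. For each $j\in N(i)$ and $k\in V_i$: $h^{(0)}_{i,j,k}=x_k\oplus\mathbb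 1_{k=i}\oplus\mathbb 1_{k=j}$ ($\oplus$ = concatenation), $h^{(t+1)}_{i,j,k}=U_t\big(h^{(t)}_{i,j,k},\sum_{l\in N_i(k)}M_t(h^{(t)}_{i,j,k},h^{(t)}_{i,j,l},e_{k,l})\big)$; then $h_{i,j}=R_{\text{edge}}(\{\!\{h^{(T)}_{i,j,k}:k\in V_i\}\!\})$ and $h_i=R_{\text{node}}(\{\!\{h_{i,j}:j\in N(i)\}\!\})$. The node-level function computed is $(i,G)\mapsto h_i$; the class of I$^2$-GNNs consists of all such choices. *)

theory Defs
  imports Complex_Main "HOL-Library.Multiset"
begin

record 'v graph =
  verts :: "'v set"
  adj   :: "'v \<Rightarrow> 'v \<Rightarrow> bool"
  nattr :: "'v \<Rightarrow> real list"
  eattr :: "'v \<Rightarrow> 'v \<Rightarrow> real list"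

definition wf_graph :: "('v, 'z) graph_scheme \<Rightarrow> bool" where
  "wf_graph G \<longleftrightarrow>
     finite (verts G) \<and>
     (\<forall>u v. adj G u v \<longrightarrow> u \<in> verts G \<and> v \<in> verts G) \<and>
     (\<forall>u v. adj G u v \<longrightarrow> adj G v u) \<and>
     (\<forall>u. \<not> adj G u u) \<and>
     (\<forall>u v. eattr G u v = eattr G v u) \<and>
     (\<exists>d. \<forall>v \<in> verts G. length (nattr G v) = d) \<and>
     (\<exists>d. \<forall>u v. length (eattr G u v) = d)"

definition nbrs :: "('v, 'z) graph_scheme \<Rightarrow> 'v \<Rightarrow> 'v set" where
  "nbrs G v = {u \<in> verts G. adj G v u}"

definition is_cycle :: "nat \<Rightarrow> ('v, 'z) graph_scheme \<Rightarrow> 'v list \<Rightarrow> bool" where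
  "is_cycle L G vs \<longleftrightarrow> 3 \<le> L \<and> length vs = L \<and> distinct vs \<and> set vs \<subseteq> verts G \<and>
     (\<forall>k < L. adj G (vs ! k) (vs ! ((k + 1) mod L)))"

definition cycle_edges :: "'v list \<Rightarrow> 'v set set" where
  "cycle_edges vs = {{vs ! k, vs ! ((k + 1) mod length vs)} | k. k < length vs}"

definition cycle_count :: "nat \<Rightarrow> ('v, 'z) graph_scheme \<Rightarrow> 'v \<Rightarrow> nat" where
  "cycle_count L G i = card {cycle_edges vs | vs. is_cycle L G vs \<and> i \<in> set vs}"

definition edge_rel :: "('v, 'z) graph_scheme \<Rightarrow> ('v \<times> 'v) set" where
  "edge_rel G = {(u, v). u \<in> verts G \<and> v \<in> verts G \<and> adj G u v}"

definition khop :: "nat \<Rightarrow> ('v, 'z) graph_scheme \<Rightarrow> 'v \<Rightarrow> 'v set" where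
  "khop K G i = {k \<in> verts G. \<exists>n \<le> K. (i, k) \<in> edge_rel G ^^ n}"

record i2gnn =
  hopK  :: nat
  layers :: nat
  mdim  :: "nat \<Rightarrow> nat"
  msg   :: "nat \<Rightarrow> real list \<Rightarrow> real list \<Rightarrow> real list \<Rightarrow> real list"
  upd   :: "nat \<Rightarrow> real list \<Rightarrow> real list \<Rightarrow> real list"
  redge :: "real list multiset \<Rightarrow> real list"
  rnode :: "real list multiset \<Rightarrow> real list"

definition valid_i2gnn :: "i2gnn \<Rightarrow> bool" where
  "valid_i2gnn P \<longleftrightarrow> 1 \<le> hopK P \<and>
     (\<forall>t a b c. length (msg P t a b c) = mdim P t)"

definition vsum :: "nat \<Rightarrow> ('a \<Rightarrow> real list) \<Rightarrow> 'a set \<Rightarrow> real list" where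
  "vsum d f A = map (\<lambda>c. \<Sum>l\<in>A. f l ! c) [0..<d]"

fun hfeat :: "i2gnn \<Rightarrow> ('v, 'z) graph_scheme \<Rightarrow> 'v \<Rightarrow> 'v \<Rightarrow> nat \<Rightarrow> 'v \<Rightarrow> real list" where
  "hfeat P G i j 0 k =
     nattr G k @ [if k = i then 1 else 0, if k = j then 1 else 0]"
| "hfeat P G i j (Suc t) k =
     upd P t (hfeat P G i j t k)
       (vsum (mdim P t)
          (\<lambda>l. msg P t (hfeat P G i j t k) (hfeat P G i j t l) (eattr G k l))
          {l \<in> khop (hopK P) G i. adj G k l})"

definition edge_rep :: "i2gnn \<Rightarrow> ('v, 'z) graph_scheme \<Rightarrow> 'v \<Rightarrow> 'v \<Rightarrow> real list" where
  "edge_rep P G i j =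
     redge P (image_mset (hfeat P G i j (layers P)) (mset_set (khop (hopK P) G i)))"

definition node_rep :: "i2gnn \<Rightarrow> ('v, 'z) graph_scheme \<Rightarrow> 'v \<Rightarrow> real list" where
  "node_rep P G i = rnode P (image_mset (edge_rep P G i) (mset_set (nbrs G i)))"

end

theory Submission
  imports Defs
begin


locale cg =
  fixes V :: "'v set" and E :: "'v \<Rightarrow> 'v \<Rightarrow> bool" and i :: 'v
  assumes fin: "finite V" and iV: "i \<in> V"
    and sym: "\<And>x y. E x y \<Longrightarrow> E y x" and irr: "\<And>x. \<not> E x x"
    and clo: "\<And>x y. x \<in> V \<Longrightarrow> E x y \<Longrightarrow> y \<in> V"
begin

definition X :: "'v \<Rightarrow> 'v \<Rightarrow> real" where "X j b = (\<Sum>a\<in>V. of_bool (E b a \<and> E a j \<and> a \<noteq> i))"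
definition Y :: "'v \<Rightarrow> 'v \<Rightarrow> real" where "Y j c = (\<Sum>d\<in>V. of_bool (E c d \<and> E d i \<and> d \<noteq> j))"
definition Z :: "'v \<Rightarrow> 'v \<Rightarrow> real" where "Z j b = (\<Sum>a\<in>V. of_bool (E b a \<and> E a i \<and> E a j))"
definition NB :: "'v \<Rightarrow> 'v \<Rightarrow> real" where "NB j k = (\<Sum>l\<in>V. of_bool (E k l \<and> l \<noteq> i \<and> l \<noteq> j))"
definition CI :: "'v \<Rightarrow> real" where "CI k = (\<Sum>l\<in>V. of_bool (E k l \<and> E l i))"
definition W :: "'v \<Rightarrow> 'v \<Rightarrow> real" where "W j b = (\<Sum>c\<in>V. of_bool (E b c \<and> c \<noteq> i \<and> c \<noteq> j) * Y j c)"
definition Vv :: "'v \<Rightarrow> 'v \<Rightarrow> real" where "Vv j k = (\<Sum>l\<in>V. of_bool (E k l \<and> l \<noteq> i) * X j l)"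

definition M6 where "M6 j a b c d \<longleftrightarrow> E i j \<and> E j a \<and> a \<noteq> i \<and> E a b \<and> b \<noteq> i \<and> b \<noteq> j \<and> E b c \<and> c \<noteq> i \<and> c \<noteq> j \<and> E c d \<and> E d i \<and> d \<noteq> j"

lemma pw6: "of_bool (M6 j a b c d \<and> a \<noteq> c \<and> b \<noteq> d \<and> a \<noteq> d) =
  (of_bool (M6 j a b c d) - of_bool (M6 j a b c d \<and> a = c) - of_bool (M6 j a b c d \<and> b = d)
   - of_bool (M6 j a b c d \<and> a = d) + of_bool (M6 j a b c d \<and> a = c \<and> b = d) :: real)"
  using irr by (cases "a = c"; cases "b = d"; cases "a = d"; auto simp: M6_def)

lemma main6: "(\<Sum>j\<in>V. \<Sum>a\<in>V. \<Sum>b\<in>V. \<Sum>c\<in>V. \<Sum>d\<in>V. of_bool (M6 j a b c d))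
  = (\<Sum>j\<in>V. of_bool (E i j) * (\<Sum>b\<in>V. (1 - of_bool (b = i)) * (1 - of_bool (b = j)) * X j b * W j b))"
proof -
  have "(\<Sum>a\<in>V. \<Sum>b\<in>V. \<Sum>c\<in>V. \<Sum>d\<in>V. of_bool (M6 j a b c d)) =
     of_bool (E i j) * (\<Sum>b\<in>V. (1 - of_bool (b = i)) * (1 - of_bool (b = j)) * X j b * W j b)" for j
  proof -
    have "(\<Sum>a\<in>V. \<Sum>b\<in>V. \<Sum>c\<in>V. \<Sum>d\<in>V. of_bool (M6 j a b c d)) =
          (\<Sum>b\<in>V. \<Sum>a\<in>V. \<Sum>c\<in>V. \<Sum>d\<in>V. of_bool (M6 j a b c d))" by (rule sum.swap)
    also have "\<dots> = (\<Sum>b\<in>V. of_bool (E i j) * ((1 - of_bool (b = i)) * (1 - of_bool (b = j)) * X j b * W j b))"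
    proof (rule sum.cong[OF refl])
      fix b
      have e: "X j b * W j b = (\<Sum>a\<in>V. \<Sum>c\<in>V. \<Sum>d\<in>V. of_bool (E b a \<and> E a j \<and> a \<noteq> i) * (of_bool (E b c \<and> c \<noteq> i \<and> c \<noteq> j) * of_bool (E c d \<and> E d i \<and> d \<noteq> j)))"
        unfolding X_def sum_distrib_right unfolding W_def Y_def sum_distrib_left ..
      show "(\<Sum>a\<in>V. \<Sum>c\<in>V. \<Sum>d\<in>V. of_bool (M6 j a b c d)) = of_bool (E i j) * ((1 - of_bool (b = i)) * (1 - of_bool (b = j)) * X j b * W j b)"
        unfolding mult.assoc[of _ "X j b"] e sum_distrib_left
        by (rule sum.cong[OF refl], rule sum.cong[OF refl], rule sum.cong[OF refl])
           (auto simp: M6_def sym)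
    qed
    finally show ?thesis by (simp add: sum_distrib_left)
  qed
  then show ?thesis by simp
qed


lemma d1: "a \<in> V \<Longrightarrow> (\<Sum>c\<in>V. of_bool (P c \<and> a = c) :: real) = of_bool (P a)"
proof -
  assume a: "a \<in> V"
  have "(\<Sum>c\<in>V. of_bool (P c \<and> a = c) :: real) = (\<Sum>c\<in>V. if a = c then of_bool (P a) else 0)"
    by (rule sum.cong) auto
  also have "\<dots> = of_bool (P a)" using a fin by (simp add: sum.delta)
  finally show ?thesis .
qed

lemma d2: "a \<in> V \<Longrightarrow> (\<Sum>c\<in>V. \<Sum>d\<in>V. of_bool (P c d \<and> a = c) :: real) = (\<Sum>d\<in>V. of_bool (P a d))"
proof -
  assume a: "a \<in> V"
  have "(\<Sum>c\<in>V. \<Sum>d\<in>V. of_bool (P c d \<and> a = c) :: real) = (\<Sum>c\<in>V. if a = c then (\<Sum>d\<in>V. of_bool (P a d)) else 0)"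
    by (rule sum.cong) auto
  also have "\<dots> = (\<Sum>d\<in>V. of_bool (P a d))" using a fin by (simp add: sum.delta)
  finally show ?thesis .
qed

lemma cAC: "(\<Sum>a\<in>V. \<Sum>b\<in>V. \<Sum>c\<in>V. \<Sum>d\<in>V. of_bool (P a b c d \<and> a = c) :: real) = (\<Sum>a\<in>V. \<Sum>b\<in>V. \<Sum>d\<in>V. of_bool (P a b a d))"
proof (rule sum.cong[OF refl], rule sum.cong[OF refl])
  fix a b assume "a \<in> V" then show "(\<Sum>c\<in>V. \<Sum>d\<in>V. of_bool (P a b c d \<and> a = c) :: real) = (\<Sum>d\<in>V. of_bool (P a b a d))" by (rule d2)
qed

lemma cBD: "(\<Sum>a\<in>V. \<Sum>b\<in>V. \<Sum>c\<in>V. \<Sum>d\<in>V. of_bool (P a b c d \<and> b = d) :: real) = (\<Sum>a\<in>V. \<Sum>b\<in>V. \<Sum>c\<in>V. of_bool (P a b c b))"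
proof (rule sum.cong[OF refl], rule sum.cong[OF refl], rule sum.cong[OF refl])
  fix a b c assume "b \<in> V" then show "(\<Sum>d\<in>V. of_bool (P a b c d \<and> b = d) :: real) = of_bool (P a b c b)" by (rule d1)
qed

lemma cAD: "(\<Sum>a\<in>V. \<Sum>b\<in>V. \<Sum>c\<in>V. \<Sum>d\<in>V. of_bool (P a b c d \<and> a = d) :: real) = (\<Sum>a\<in>V. \<Sum>b\<in>V. \<Sum>c\<in>V. of_bool (P a b c a))"
proof (rule sum.cong[OF refl], rule sum.cong[OF refl], rule sum.cong[OF refl])
  fix a b c assume "a \<in> V" then show "(\<Sum>d\<in>V. of_bool (P a b c d \<and> a = d) :: real) = of_bool (P a b c a)" by (rule d1)
qed

lemma cB3: "(\<Sum>a\<in>V. \<Sum>b\<in>V. \<Sum>d\<in>V. of_bool (P a b d \<and> b = d) :: real) = (\<Sum>a\<in>V. \<Sum>b\<in>V. of_bool (P a b b))"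
proof (rule sum.cong[OF refl], rule sum.cong[OF refl])
  fix a b assume "b \<in> V" then show "(\<Sum>d\<in>V. of_bool (P a b d \<and> b = d) :: real) = of_bool (P a b b)" by (rule d1)
qed

lemma T2: "(\<Sum>a\<in>V. \<Sum>b\<in>V. \<Sum>c\<in>V. \<Sum>d\<in>V. of_bool (M6 j a b c d \<and> a = c)) =
   of_bool (E i j) * (\<Sum>a\<in>V. of_bool (E a j) * (1 - of_bool (a = i)) * NB j a * Y j a)"
proof -
  have "(\<Sum>a\<in>V. \<Sum>b\<in>V. \<Sum>c\<in>V. \<Sum>d\<in>V. of_bool (M6 j a b c d \<and> a = c) :: real) =
      (\<Sum>a\<in>V. \<Sum>b\<in>V. \<Sum>d\<in>V. of_bool (M6 j a b a d))"
    by (rule cAC[where P="M6 j"])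
  also have "\<dots> = (\<Sum>a\<in>V. of_bool (E i j) * (of_bool (E a j) * (1 - of_bool (a = i)) * NB j a * Y j a))"
  proof (rule sum.cong[OF refl])
    fix a
    have e: "NB j a * Y j a = (\<Sum>b\<in>V. \<Sum>d\<in>V. of_bool (E a b \<and> b \<noteq> i \<and> b \<noteq> j) * of_bool (E a d \<and> E d i \<and> d \<noteq> j))"
      unfolding NB_def sum_distrib_right unfolding Y_def sum_distrib_left ..
    show "(\<Sum>b\<in>V. \<Sum>d\<in>V. of_bool (M6 j a b a d)) = of_bool (E i j) * (of_bool (E a j) * (1 - of_bool (a = i)) * NB j a * Y j a)"
      unfolding mult.assoc[of _ "NB j a"] e sum_distrib_left
      by (rule sum.cong[OF refl], rule sum.cong[OF refl]) (auto simp: M6_def sym irr)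
  qed
  finally show ?thesis by (simp add: sum_distrib_left)
qed

lemma T3: "(\<Sum>a\<in>V. \<Sum>b\<in>V. \<Sum>c\<in>V. \<Sum>d\<in>V. of_bool (M6 j a b c d \<and> b = d)) =
   of_bool (E i j) * (\<Sum>b\<in>V. (1 - of_bool (b = i)) * (1 - of_bool (b = j)) * of_bool (E b i) * X j b * NB j b)"
proof -
  have "(\<Sum>a\<in>V. \<Sum>b\<in>V. \<Sum>c\<in>V. \<Sum>d\<in>V. of_bool (M6 j a b c d \<and> b = d) :: real) =
      (\<Sum>a\<in>V. \<Sum>b\<in>V. \<Sum>c\<in>V. of_bool (M6 j a b c b))"
    by (rule cBD[where P="M6 j"])
  also have "\<dots> = (\<Sum>b\<in>V. \<Sum>a\<in>V. \<Sum>c\<in>V. of_bool (M6 j a b c b))" by (rule sum.swap)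
  also have "\<dots> = (\<Sum>b\<in>V. of_bool (E i j) * ((1 - of_bool (b = i)) * (1 - of_bool (b = j)) * of_bool (E b i) * X j b * NB j b))"
  proof (rule sum.cong[OF refl])
    fix b
    have e: "X j b * NB j b = (\<Sum>a\<in>V. \<Sum>c\<in>V. of_bool (E b a \<and> E a j \<and> a \<noteq> i) * of_bool (E b c \<and> c \<noteq> i \<and> c \<noteq> j))"
      unfolding X_def sum_distrib_right unfolding NB_def sum_distrib_left ..
    show "(\<Sum>a\<in>V. \<Sum>c\<in>V. of_bool (M6 j a b c b)) = of_bool (E i j) * ((1 - of_bool (b = i)) * (1 - of_bool (b = j)) * of_bool (E b i) * X j b * NB j b)"
      unfolding mult.assoc[of _ "X j b"] e sum_distrib_left
      by (rule sum.cong[OF refl], rule sum.cong[OF refl]) (auto simp: M6_def sym irr)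
  qed
  finally show ?thesis by (simp add: sum_distrib_left)
qed

lemma T5: "(\<Sum>a\<in>V. \<Sum>b\<in>V. \<Sum>c\<in>V. \<Sum>d\<in>V. of_bool (M6 j a b c d \<and> a = c \<and> b = d)) =
   of_bool (E i j) * (\<Sum>b\<in>V. (1 - of_bool (b = i)) * (1 - of_bool (b = j)) * of_bool (E b i) * X j b)"
proof -
  have "(\<Sum>a\<in>V. \<Sum>b\<in>V. \<Sum>c\<in>V. \<Sum>d\<in>V. of_bool (M6 j a b c d \<and> a = c \<and> b = d) :: real) =
      (\<Sum>a\<in>V. \<Sum>b\<in>V. \<Sum>c\<in>V. \<Sum>d\<in>V. of_bool ((M6 j a b c d \<and> b = d) \<and> a = c))"
    by (simp add: conj_ac)
  also have "\<dots> = (\<Sum>a\<in>V. \<Sum>b\<in>V. \<Sum>d\<in>V. of_bool (M6 j a b a d \<and> b = d))"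
    by (intro sum.cong refl d2) auto
  also have "\<dots> = (\<Sum>a\<in>V. \<Sum>b\<in>V. of_bool (M6 j a b a b))"
    by (intro sum.cong refl d1) auto
  also have "\<dots> = (\<Sum>b\<in>V. \<Sum>a\<in>V. of_bool (M6 j a b a b))" by (rule sum.swap)
  also have "\<dots> = (\<Sum>b\<in>V. of_bool (E i j) * ((1 - of_bool (b = i)) * (1 - of_bool (b = j)) * of_bool (E b i) * X j b))"
    unfolding X_def sum_distrib_left
    by (rule sum.cong[OF refl], rule sum.cong[OF refl]) (auto simp: M6_def sym irr)
  finally show ?thesis by (simp add: sum_distrib_left)
qed


definition Q6 where "Q6 j x b c \<longleftrightarrow> E i x \<and> E x j \<and> E j b \<and> b \<noteq> i \<and> E b c \<and> c \<noteq> i \<and> E c j"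

lemma T4j: "(\<Sum>x\<in>V. \<Sum>b\<in>V. \<Sum>c\<in>V. of_bool (M6 x j b c j) :: real) =
   of_bool (E i j) * (Vv j j * CI j - 2 * (\<Sum>x\<in>V. of_bool (E x i) * of_bool (E x j) * X j x))"
proof -
  have pw: "of_bool (M6 x j b c j) = of_bool (E i j) * (of_bool (Q6 j x b c) - of_bool (Q6 j x b c \<and> x = b) - of_bool (Q6 j x b c \<and> x = c) :: real)" for x b c
    using irr by (cases "x = b"; cases "x = c"; auto simp: M6_def Q6_def sym)
  have s1: "(\<Sum>x\<in>V. \<Sum>b\<in>V. \<Sum>c\<in>V. of_bool (Q6 j x b c) :: real) = Vv j j * CI j"
  proof -
    have "(\<Sum>x\<in>V. \<Sum>b\<in>V. \<Sum>c\<in>V. of_bool (Q6 j x b c) :: real) =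
       (\<Sum>x\<in>V. \<Sum>b\<in>V. \<Sum>c\<in>V. of_bool (E j x \<and> E x i) * (of_bool (E j b \<and> b \<noteq> i) * of_bool (E b c \<and> E c j \<and> c \<noteq> i)))"
      by (intro sum.cong refl) (auto simp: Q6_def sym irr)
    also have "\<dots> = CI j * Vv j j"
      unfolding CI_def sum_distrib_right unfolding Vv_def X_def sum_distrib_left ..
    finally show ?thesis by simp
  qed
  have s2: "(\<Sum>x\<in>V. \<Sum>b\<in>V. \<Sum>c\<in>V. of_bool (Q6 j x b c \<and> x = b) :: real) = (\<Sum>x\<in>V. of_bool (E x i) * of_bool (E x j) * X j x)"
  proof -
    have "(\<Sum>x\<in>V. \<Sum>b\<in>V. \<Sum>c\<in>V. of_bool (Q6 j x b c \<and> x = b) :: real) = (\<Sum>x\<in>V. \<Sum>c\<in>V. of_bool (Q6 j x x c))"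
    proof (rule sum.cong[OF refl])
      fix x assume "x \<in> V" then show "(\<Sum>b\<in>V. \<Sum>c\<in>V. of_bool (Q6 j x b c \<and> x = b) :: real) = (\<Sum>c\<in>V. of_bool (Q6 j x x c))"
        by (rule d2)
    qed
    also have "\<dots> = (\<Sum>x\<in>V. of_bool (E x i) * of_bool (E x j) * X j x)"
      unfolding X_def sum_distrib_left
      by (intro sum.cong refl) (auto simp: Q6_def sym irr)
    finally show ?thesis .
  qed
  have s3: "(\<Sum>x\<in>V. \<Sum>b\<in>V. \<Sum>c\<in>V. of_bool (Q6 j x b c \<and> x = c) :: real) = (\<Sum>x\<in>V. of_bool (E x i) * of_bool (E x j) * X j x)"
  proof -
    have "(\<Sum>x\<in>V. \<Sum>b\<in>V. \<Sum>c\<in>V. of_bool (Q6 j x b c \<and> x = c) :: real) = (\<Sum>x\<in>V. \<Sum>b\<in>V. of_bool (Q6 j x b x))"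
    proof (rule sum.cong[OF refl], rule sum.cong[OF refl])
      fix x b assume "x \<in> V" then show "(\<Sum>c\<in>V. of_bool (Q6 j x b c \<and> x = c) :: real) = of_bool (Q6 j x b x)"
        by (rule d1)
    qed
    also have "\<dots> = (\<Sum>x\<in>V. of_bool (E x i) * of_bool (E x j) * X j x)"
      unfolding X_def sum_distrib_left
      by (intro sum.cong refl) (auto simp: Q6_def sym irr)
    finally show ?thesis .
  qed
  have "(\<Sum>x\<in>V. \<Sum>b\<in>V. \<Sum>c\<in>V. of_bool (M6 x j b c j) :: real) =
     of_bool (E i j) * ((\<Sum>x\<in>V. \<Sum>b\<in>V. \<Sum>c\<in>V. of_bool (Q6 j x b c)) - (\<Sum>x\<in>V. \<Sum>b\<in>V. \<Sum>c\<in>V. of_bool (Q6 j x b c \<and> x = b))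
        - (\<Sum>x\<in>V. \<Sum>b\<in>V. \<Sum>c\<in>V. of_bool (Q6 j x b c \<and> x = c)))"
    unfolding pw by (simp add: sum_distrib_left sum_subtractf right_diff_distrib)
  then show ?thesis unfolding s1 s2 s3 by simp
qed

lemma T4: "(\<Sum>j\<in>V. \<Sum>a\<in>V. \<Sum>b\<in>V. \<Sum>c\<in>V. \<Sum>d\<in>V. of_bool (M6 j a b c d \<and> a = d) :: real) =
  (\<Sum>j\<in>V. of_bool (E i j) * (Vv j j * CI j - 2 * (\<Sum>x\<in>V. of_bool (E x i) * of_bool (E x j) * X j x)))"
proof -
  have "(\<Sum>j\<in>V. \<Sum>a\<in>V. \<Sum>b\<in>V. \<Sum>c\<in>V. \<Sum>d\<in>V. of_bool (M6 j a b c d \<and> a = d) :: real) =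
     (\<Sum>j\<in>V. \<Sum>a\<in>V. \<Sum>b\<in>V. \<Sum>c\<in>V. of_bool (M6 j a b c a))"
    by (rule sum.cong[OF refl], rule cAD[where P="M6 j" for j])
  also have "\<dots> = (\<Sum>a\<in>V. \<Sum>j\<in>V. \<Sum>b\<in>V. \<Sum>c\<in>V. of_bool (M6 j a b c a))" by (rule sum.swap)
  also have "\<dots> = (\<Sum>j\<in>V. of_bool (E i j) * (Vv j j * CI j - 2 * (\<Sum>x\<in>V. of_bool (E x i) * of_bool (E x j) * X j x)))"
    by (rule sum.cong[OF refl], rule T4j)
  finally show ?thesis .
qed


lemma dk: "j \<in> V \<Longrightarrow> (\<Sum>k\<in>V. of_bool (k = j) * f k) = (f j :: real)"
proof -
  assume a: "j \<in> V"
  have "(\<Sum>k\<in>V. of_bool (k = j) * f k) = (\<Sum>k\<in>V. if k = j then f k else 0)"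
    by (rule sum.cong) auto
  also have "\<dots> = f j" using a fin by (simp add: sum.delta')
  finally show ?thesis .
qed

definition p6 :: "'v \<Rightarrow> 'v \<Rightarrow> real" where
 "p6 j k = (1 - of_bool (k = i)) * (1 - of_bool (k = j)) * X j k * W j k
   - of_bool (E k j) * (1 - of_bool (k = i)) * NB j k * Y j k
   - (1 - of_bool (k = i)) * (1 - of_bool (k = j)) * of_bool (E k i) * X j k * NB j k
   + (1 - of_bool (k = i)) * (1 - of_bool (k = j)) * of_bool (E k i) * X j k
   - of_bool (k = j) * Vv j k * CI k + 2 * (of_bool (E k i) * of_bool (E k j) * X j k)"

lemma L6: "(\<Sum>j\<in>V. \<Sum>a\<in>V. \<Sum>b\<in>V. \<Sum>c\<in>V. \<Sum>d\<in>V. of_bool (M6 j a b c d \<and> a \<noteq> c \<and> b \<noteq> d \<and> a \<noteq> d) :: real) =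
  (\<Sum>j\<in>V. of_bool (E i j) * (\<Sum>k\<in>V. p6 j k))"
proof -
  have "(\<Sum>j\<in>V. \<Sum>a\<in>V. \<Sum>b\<in>V. \<Sum>c\<in>V. \<Sum>d\<in>V. of_bool (M6 j a b c d \<and> a \<noteq> c \<and> b \<noteq> d \<and> a \<noteq> d) :: real) =
    (\<Sum>j\<in>V. \<Sum>a\<in>V. \<Sum>b\<in>V. \<Sum>c\<in>V. \<Sum>d\<in>V. of_bool (M6 j a b c d))
    - (\<Sum>j\<in>V. \<Sum>a\<in>V. \<Sum>b\<in>V. \<Sum>c\<in>V. \<Sum>d\<in>V. of_bool (M6 j a b c d \<and> a = c))
    - (\<Sum>j\<in>V. \<Sum>a\<in>V. \<Sum>b\<in>V. \<Sum>c\<in>V. \<Sum>d\<in>V. of_bool (M6 j a b c d \<and> b = d))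
    - (\<Sum>j\<in>V. \<Sum>a\<in>V. \<Sum>b\<in>V. \<Sum>c\<in>V. \<Sum>d\<in>V. of_bool (M6 j a b c d \<and> a = d))
    + (\<Sum>j\<in>V. \<Sum>a\<in>V. \<Sum>b\<in>V. \<Sum>c\<in>V. \<Sum>d\<in>V. of_bool (M6 j a b c d \<and> a = c \<and> b = d))"
    unfolding pw6 by (simp only: sum_subtractf sum.distrib)
  also have "\<dots> = (\<Sum>j\<in>V. of_bool (E i j) * (\<Sum>k\<in>V. p6 j k))"
    unfolding main6 T2 T3 T4 T5
  proof -
    have "of_bool (E i j) * (\<Sum>k\<in>V. p6 j k) =
      of_bool (E i j) * (\<Sum>b\<in>V. (1 - of_bool (b = i)) * (1 - of_bool (b = j)) * X j b * W j b)
     - of_bool (E i j) * (\<Sum>a\<in>V. of_bool (E a j) * (1 - of_bool (a = i)) * NB j a * Y j a)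
     - of_bool (E i j) * (\<Sum>b\<in>V. (1 - of_bool (b = i)) * (1 - of_bool (b = j)) * of_bool (E b i) * X j b * NB j b)
     - of_bool (E i j) * (Vv j j * CI j - 2 * (\<Sum>x\<in>V. of_bool (E x i) * of_bool (E x j) * X j x))
     + of_bool (E i j) * (\<Sum>b\<in>V. (1 - of_bool (b = i)) * (1 - of_bool (b = j)) * of_bool (E b i) * X j b)"
      if j: "j \<in> V" for j
    proof -
      have "(\<Sum>k\<in>V. of_bool (k = j) * Vv j k * CI k) = Vv j j * CI j"
        using dk[OF j, of "\<lambda>k. Vv j k * CI k"] by (simp add: mult.assoc)
      then show ?thesis
        unfolding p6_def by (simp add: sum.distrib sum_subtractf sum_distrib_left algebra_simps)
    qed
    then show "(\<Sum>j\<in>V. of_bool (E i j) * (\<Sum>b\<in>V. (1 - of_bool (b = i)) * (1 - of_bool (b = j)) * X j b * W j b)) -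
    (\<Sum>j\<in>V. of_bool (E i j) * (\<Sum>a\<in>V. of_bool (E a j) * (1 - of_bool (a = i)) * NB j a * Y j a)) -
    (\<Sum>j\<in>V. of_bool (E i j) * (\<Sum>b\<in>V. (1 - of_bool (b = i)) * (1 - of_bool (b = j)) * of_bool (E b i) * X j b * NB j b)) -
    (\<Sum>j\<in>V. of_bool (E i j) * (Vv j j * CI j - 2 * (\<Sum>x\<in>V. of_bool (E x i) * of_bool (E x j) * X j x))) +
    (\<Sum>j\<in>V. of_bool (E i j) * (\<Sum>b\<in>V. (1 - of_bool (b = i)) * (1 - of_bool (b = j)) * of_bool (E b i) * X j b)) =
    (\<Sum>j\<in>V. of_bool (E i j) * sum (p6 j) V)"
      by (simp add: sum.distrib sum_subtractf cong: sum.cong)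
  qed
  finally show ?thesis .
qed


definition p3 :: "'v \<Rightarrow> 'v \<Rightarrow> real" where "p3 j k = of_bool (E k i) * of_bool (E k j)"
definition p4 :: "'v \<Rightarrow> 'v \<Rightarrow> real" where "p4 j k = of_bool (E k j) * (1 - of_bool (k = i)) * Y j k"
definition p5 :: "'v \<Rightarrow> 'v \<Rightarrow> real" where "p5 j k = (1 - of_bool (k = i)) * (1 - of_bool (k = j)) * (X j k * Y j k - Z j k)"

lemma L3: "(\<Sum>j\<in>V. \<Sum>a\<in>V. of_bool (E i j \<and> E j a \<and> E a i) :: real) = (\<Sum>j\<in>V. of_bool (E i j) * (\<Sum>k\<in>V. p3 j k))"
  unfolding p3_def sum_distrib_left
  by (intro sum.cong refl) (auto simp: sym)

lemma L4: "(\<Sum>j\<in>V. \<Sum>a\<in>V. \<Sum>b\<in>V. of_bool (E i j \<and> E j a \<and> a \<noteq> i \<and> E a b \<and> E b i \<and> b \<noteq> j) :: real) = (\<Sum>j\<in>V. of_bool (E i j) * (\<Sum>k\<in>V. p4 j k))"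
  unfolding p4_def Y_def sum_distrib_left
  by (intro sum.cong refl) (auto simp: sym)

definition M5 where "M5 j a b c \<longleftrightarrow> E i j \<and> E j a \<and> a \<noteq> i \<and> E a b \<and> b \<noteq> i \<and> b \<noteq> j \<and> E b c \<and> E c i \<and> c \<noteq> j"

lemma L5: "(\<Sum>j\<in>V. \<Sum>a\<in>V. \<Sum>b\<in>V. \<Sum>c\<in>V. of_bool (M5 j a b c \<and> a \<noteq> c) :: real) = (\<Sum>j\<in>V. of_bool (E i j) * (\<Sum>k\<in>V. p5 j k))"
proof (rule sum.cong[OF refl])
  fix j
  have pw: "of_bool (M5 j a b c \<and> a \<noteq> c) = (of_bool (M5 j a b c) - of_bool (M5 j a b c \<and> a = c) :: real)" for a b c
    by auto
  have e1: "(\<Sum>a\<in>V. \<Sum>b\<in>V. \<Sum>c\<in>V. of_bool (M5 j a b c) :: real) = (\<Sum>b\<in>V. \<Sum>a\<in>V. \<Sum>c\<in>V. of_bool (M5 j a b c))"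
    by (rule sum.swap)
  have e2: "(\<Sum>a\<in>V. \<Sum>b\<in>V. \<Sum>c\<in>V. of_bool (M5 j a b c \<and> a = c) :: real) = (\<Sum>a\<in>V. \<Sum>b\<in>V. of_bool (M5 j a b a))"
  proof (rule sum.cong[OF refl], rule sum.cong[OF refl])
    fix a b assume "a \<in> V" then show "(\<Sum>c\<in>V. of_bool (M5 j a b c \<and> a = c) :: real) = of_bool (M5 j a b a)" by (rule d1)
  qed
  have e3: "(\<Sum>a\<in>V. \<Sum>b\<in>V. of_bool (M5 j a b a) :: real) = (\<Sum>b\<in>V. \<Sum>a\<in>V. of_bool (M5 j a b a))"
    by (rule sum.swap)
  have e4: "(\<Sum>b\<in>V. \<Sum>a\<in>V. \<Sum>c\<in>V. of_bool (M5 j a b c) :: real) - (\<Sum>b\<in>V. \<Sum>a\<in>V. of_bool (M5 j a b a))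
     = of_bool (E i j) * (\<Sum>k\<in>V. p5 j k)"
  proof -
    have "(\<Sum>a\<in>V. \<Sum>c\<in>V. of_bool (M5 j a b c) :: real) - (\<Sum>a\<in>V. of_bool (M5 j a b a)) = of_bool (E i j) * p5 j b" for b
    proof -
      have x: "X j b * Y j b = (\<Sum>a\<in>V. \<Sum>c\<in>V. of_bool (E b a \<and> E a j \<and> a \<noteq> i) * of_bool (E b c \<and> E c i \<and> c \<noteq> j))"
        unfolding X_def sum_distrib_right unfolding Y_def sum_distrib_left ..
      have a1: "(\<Sum>a\<in>V. \<Sum>c\<in>V. of_bool (M5 j a b c) :: real) = of_bool (E i j) * ((1 - of_bool (b = i)) * (1 - of_bool (b = j)) * (X j b * Y j b))"
        unfolding x sum_distrib_left by (intro sum.cong refl) (auto simp: M5_def sym)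
      have a2: "(\<Sum>a\<in>V. of_bool (M5 j a b a) :: real) = of_bool (E i j) * ((1 - of_bool (b = i)) * (1 - of_bool (b = j)) * Z j b)"
        unfolding Z_def sum_distrib_left by (intro sum.cong refl) (auto simp: M5_def sym irr)
      show ?thesis unfolding a1 a2 p5_def by (simp add: algebra_simps)
    qed
    then show ?thesis by (simp add: sum_subtractf[symmetric] sum_distrib_left)
  qed
  show "(\<Sum>a\<in>V. \<Sum>b\<in>V. \<Sum>c\<in>V. of_bool (M5 j a b c \<and> a \<noteq> c) :: real) = of_bool (E i j) * (\<Sum>k\<in>V. p5 j k)"
    unfolding pw sum_subtractf e2 e1 e3 e4 ..
qed

end


definition mI :: "real list \<Rightarrow> real" where "mI b = b ! (length b - 2)"
definition mJ :: "real list \<Rightarrow> real" where "mJ b = b ! (length b - 1)"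

definition gmsg :: "nat \<Rightarrow> real list \<Rightarrow> real list \<Rightarrow> real list \<Rightarrow> real list" where
 "gmsg t a b c = (if t = 0 then [mI b, mJ b, 0, 0, 0, 0, 0, 0]
    else if t = 1 then [b!3 * (1 - b!0), b!2 * (1 - b!1), b!2 * b!3, (1 - b!0) * (1 - b!1), b!2, 0, 0, 0]
    else [(1 - b!0) * (1 - b!1) * b!5, (1 - b!0) * b!4, 0, 0, 0, 0, 0, 0])"

definition gupd :: "nat \<Rightarrow> real list \<Rightarrow> real list \<Rightarrow> real list" where
 "gupd t a s = (if t = 0 then [mI a, mJ a, s!0, s!1]
    else if t = 1 then a @ [s!0, s!1, s!2, s!3, s!4] else a @ [s!0, s!1])"

definition q6 :: "real list \<Rightarrow> real" where
 "q6 h = (1 - h!0) * (1 - h!1) * h!4 * h!9 - h!3 * (1 - h!0) * h!7 * h!5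
   - (1 - h!0) * (1 - h!1) * h!2 * h!4 * h!7 + (1 - h!0) * (1 - h!1) * h!2 * h!4
   - h!1 * h!10 * h!8 + 2 * (h!2 * h!3 * h!4)"

definition qs :: "real list \<Rightarrow> real list" where
 "qs h = [h!2 * h!3, h!3 * (1 - h!0) * h!5, (1 - h!0) * (1 - h!1) * (h!4 * h!5 - h!6), q6 h]"

definition gnn :: "nat \<Rightarrow> i2gnn" where
 "gnn K = \<lparr> hopK = K, layers = 3, mdim = (\<lambda>_. 8), msg = gmsg, upd = gupd,
     redge = (\<lambda>M. map (\<lambda>c. sum_mset (image_mset (\<lambda>h. qs h ! c) M)) [0..<4]),
     rnode = (\<lambda>M. map (\<lambda>c. sum_mset (image_mset (\<lambda>v. v ! c) M)) [0..<4]) \<rparr>"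

lemma valid_gnn: "1 \<le> K \<Longrightarrow> valid_i2gnn (gnn K)"
  by (simp add: valid_i2gnn_def gnn_def gmsg_def)

declare hfeat.simps[simp del]

lemma vsum_nth: "c < d \<Longrightarrow> vsum d f A ! c = (\<Sum>l\<in>A. f l ! c)"
  by (simp add: vsum_def)

lemma sum_filter: "finite V \<Longrightarrow> (\<Sum>l\<in>{l\<in>V. P l}. f l) = (\<Sum>l\<in>V. of_bool (P l) * (f l :: real))"
proof -
  assume "finite V"
  then have "(\<Sum>l\<in>{l\<in>V. P l}. f l) = (\<Sum>l\<in>V. if P l then f l else 0)" by (rule sum.inter_filter)
  also have "\<dots> = (\<Sum>l\<in>V. of_bool (P l) * (f l :: real))" by (rule sum.cong) auto
  finally show ?thesis .
qed


lemma khop_cg: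
  assumes wf: "wf_graph G" and iv: "i \<in> verts G" and K: "card (edge_rel G) \<le> K"
  shows "cg (khop K G i) (adj G) i" and "khop K G i \<subseteq> verts G"
proof -
  have fv: "finite (verts G)" using wf by (simp add: wf_graph_def)
  have av: "adj G u v \<Longrightarrow> u \<in> verts G \<and> v \<in> verts G" for u v using wf by (simp add: wf_graph_def)
  have fR: "finite (edge_rel G)"
    by (rule finite_subset[of _ "verts G \<times> verts G"]) (auto simp: edge_rel_def fv)
  show sub: "khop K G i \<subseteq> verts G" by (auto simp: khop_def)
  show "cg (khop K G i) (adj G) i"
  proof
    show "finite (khop K G i)" using sub fv finite_subset by blast
    show "i \<in> khop K G i" using iv by (auto simp: khop_def intro!: exI[of _ 0])
    show "adj G y x" if "adj G x y" for x y using wf that by (simp add: wf_graph_def)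
    show "\<not> adj G x x" for x using wf by (simp add: wf_graph_def)
    fix x y assume x: "x \<in> khop K G i" and xy: "adj G x y"
    from x obtain n where "(i, x) \<in> edge_rel G ^^ n" by (auto simp: khop_def)
    then have "(i, x) \<in> (edge_rel G)\<^sup>*" by (rule relpow_imp_rtrancl)
    moreover have "(x, y) \<in> edge_rel G" using xy av by (auto simp: edge_rel_def)
    ultimately have "(i, y) \<in> (edge_rel G)\<^sup>*" by simp
    then obtain m where "m \<le> card (edge_rel G)" "(i, y) \<in> edge_rel G ^^ m"
      using rtrancl_finite_eq_relpow[OF fR] by auto
    then show "y \<in> khop K G i" using K av xy unfolding khop_def
      by (intro CollectI conjI exI[of _ m]) auto
  qed
qed

lemma sum_delta_filter:
  assumes "finite V" "i \<in> V"
  shows "(\<Sum>l\<in>{l\<in>V. P l}. if l = i then 1 else 0) = (of_bool (P i) :: real)"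
  using assms by (simp add: sum.inter_filter[symmetric] sum.delta)


lemma hS: "hfeat (gnn K') G' i' j' (Suc t) k = gupd t (hfeat (gnn K') G' i' j' t k)
  (vsum 8 (\<lambda>l. gmsg t (hfeat (gnn K') G' i' j' t k) (hfeat (gnn K') G' i' j' t l) (eattr G' k l)) {l \<in> khop K' G' i'. adj G' k l})"
  by (simp add: hfeat.simps(2)) (simp add: gnn_def)

lemma sf: "finite V \<Longrightarrow> (\<And>l. l \<in> V \<Longrightarrow> of_bool (P l) * f l = g l) \<Longrightarrow> (\<Sum>l\<in>{l\<in>V. P l}. f l) = (\<Sum>l\<in>V. g l :: real)"
  by (simp add: sum_filter)

context
  fixes G :: "('v, 'z) graph_scheme" and i j :: 'v and K :: nat
  assumes wf: "wf_graph G" and iv: "i \<in> verts G" and K: "card (edge_rel G) \<le> K"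
    and jv: "j \<in> khop K G i"
begin

interpretation C: cg "khop K G i" "adj G" i by (rule khop_cg[OF wf iv K])

lemma h1: "k \<in> khop K G i \<Longrightarrow> hfeat (gnn K) G i j (Suc 0) k =
   [of_bool (k = i), of_bool (k = j), of_bool (adj G k i), of_bool (adj G k j)]"
  by (simp add: hfeat.simps gnn_def gupd_def gmsg_def mI_def mJ_def vsum_nth nth_append sum_delta_filter[OF C.fin C.iV] sum_delta_filter[OF C.fin jv])



lemma h2: "k \<in> khop K G i \<Longrightarrow> hfeat (gnn K) G i j (Suc (Suc 0)) k =
   [of_bool (k = i), of_bool (k = j), of_bool (adj G k i), of_bool (adj G k j),
    C.X j k, C.Y j k, C.Z j k, C.NB j k, C.CI k]"
proof -
  assume k: "k \<in> khop K G i"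
  let ?V = "khop K G i"
  let ?A = "{l \<in> ?V. adj G k l}"
  let ?f = "\<lambda>l. gmsg (Suc 0) (hfeat (gnn K) G i j (Suc 0) k) (hfeat (gnn K) G i j (Suc 0) l) (eattr G k l)"
  have h1l: "l \<in> ?A \<Longrightarrow> hfeat (gnn K) G i j (Suc 0) l = [of_bool (l = i), of_bool (l = j), of_bool (adj G l i), of_bool (adj G l j)]" for l
    using h1 by auto
  have c0: "(\<Sum>l\<in>?A. ?f l ! 0) = C.X j k" unfolding C.X_def
    by (subst sum.cong[OF refl, of _ _ "\<lambda>l. of_bool (adj G l j) * (1 - of_bool (l = i))"])
       (auto simp: h1l h1[OF k] gmsg_def intro!: sf C.fin)
  have c1: "(\<Sum>l\<in>?A. ?f l ! 1) = C.Y j k" unfolding C.Y_def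
    by (subst sum.cong[OF refl, of _ _ "\<lambda>l. of_bool (adj G l i) * (1 - of_bool (l = j))"])
       (auto simp: h1l h1[OF k] gmsg_def intro!: sf C.fin)
  have c2: "(\<Sum>l\<in>?A. ?f l ! 2) = C.Z j k" unfolding C.Z_def
    by (subst sum.cong[OF refl, of _ _ "\<lambda>l. of_bool (adj G l i) * of_bool (adj G l j)"])
       (auto simp: h1l h1[OF k] gmsg_def intro!: sf C.fin)
  have c3: "(\<Sum>l\<in>?A. ?f l ! 3) = C.NB j k" unfolding C.NB_def
    by (subst sum.cong[OF refl, of _ _ "\<lambda>l. (1 - of_bool (l = i)) * (1 - of_bool (l = j))"])
       (auto simp: h1l h1[OF k] gmsg_def intro!: sf C.fin)
  have c4: "(\<Sum>l\<in>?A. ?f l ! 4) = C.CI k" unfolding C.CI_def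
    by (subst sum.cong[OF refl, of _ _ "\<lambda>l. of_bool (adj G l i)"])
       (auto simp: h1l h1[OF k] gmsg_def intro!: sf C.fin)
  show ?thesis
    using c0 c1 c2 c3 c4 k unfolding hS[where t="Suc 0"] using c0 c1 c2 c3 c4 k by (simp add: gupd_def vsum_nth h1)
qed


lemma h3: "k \<in> khop K G i \<Longrightarrow> hfeat (gnn K) G i j (Suc (Suc (Suc 0))) k =
   [of_bool (k = i), of_bool (k = j), of_bool (adj G k i), of_bool (adj G k j),
    C.X j k, C.Y j k, C.Z j k, C.NB j k, C.CI k, C.W j k, C.Vv j k]"
proof -
  assume k: "k \<in> khop K G i"
  let ?V = "khop K G i"
  let ?A = "{l \<in> ?V. adj G k l}"
  let ?f = "\<lambda>l. gmsg (Suc (Suc 0)) (hfeat (gnn K) G i j (Suc (Suc 0)) k) (hfeat (gnn K) G i j (Suc (Suc 0)) l) (eattr G k l)"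
  have h2l: "l \<in> ?A \<Longrightarrow> hfeat (gnn K) G i j (Suc (Suc 0)) l = [of_bool (l = i), of_bool (l = j), of_bool (adj G l i), of_bool (adj G l j),
    C.X j l, C.Y j l, C.Z j l, C.NB j l, C.CI l]" for l
    using h2 by auto
  have c0: "(\<Sum>l\<in>?A. ?f l ! 0) = C.W j k" unfolding C.W_def
    by (subst sum.cong[OF refl, of _ _ "\<lambda>l. (1 - of_bool (l = i)) * (1 - of_bool (l = j)) * C.Y j l"])
       (auto simp: h2l h2[OF k] gmsg_def intro!: sf C.fin)
  have c1: "(\<Sum>l\<in>?A. ?f l ! 1) = C.Vv j k" unfolding C.Vv_def
    by (subst sum.cong[OF refl, of _ _ "\<lambda>l. (1 - of_bool (l = i)) * C.X j l"])
       (auto simp: h2l h2[OF k] gmsg_def intro!: sf C.fin)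
  show ?thesis
    unfolding hS[where t="Suc (Suc 0)"] using c0 c1 k by (simp add: gupd_def vsum_nth h2)
qed

end

context
  fixes G :: "('v, 'z) graph_scheme" and i :: 'v and K :: nat
  assumes wf: "wf_graph G" and iv: "i \<in> verts G" and K: "card (edge_rel G) \<le> K"
begin

interpretation C: cg "khop K G i" "adj G" i by (rule khop_cg[OF wf iv K])

lemma er: "j \<in> khop K G i \<Longrightarrow> c < 4 \<Longrightarrow> edge_rep (gnn K) G i j ! c = (\<Sum>k\<in>khop K G i. qs (hfeat (gnn K) G i j (Suc (Suc (Suc 0))) k) ! c)"
  unfolding edge_rep_def sum_unfold_sum_mset
  by (simp add: gnn_def numeral_3_eq_3 image_mset.compositionality o_def)

lemma nbrs_eq: "nbrs G i = {j \<in> khop K G i. adj G i j}"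
  using C.clo[OF C.iV] khop_cg(2)[OF wf iv K] by (auto simp: nbrs_def)

lemma nr: "c < 4 \<Longrightarrow> node_rep (gnn K) G i ! c =
   (\<Sum>j\<in>khop K G i. of_bool (adj G i j) * (\<Sum>k\<in>khop K G i. qs (hfeat (gnn K) G i j (Suc (Suc (Suc 0))) k) ! c))"
proof -
  assume c: "c < 4"
  have "node_rep (gnn K) G i ! c = (\<Sum>j\<in>nbrs G i. edge_rep (gnn K) G i j ! c)"
    unfolding node_rep_def sum_unfold_sum_mset using c
    by (simp add: gnn_def image_mset.compositionality o_def)
  also have "\<dots> = (\<Sum>j\<in>{j \<in> khop K G i. adj G i j}. edge_rep (gnn K) G i j ! c)" by (simp add: nbrs_eq)
  also have "\<dots> = (\<Sum>j\<in>khop K G i. of_bool (adj G i j) * (\<Sum>k\<in>khop K G i. qs (hfeat (gnn K) G i j (Suc (Suc (Suc 0))) k) ! c))"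
    by (rule sf[OF C.fin]) (simp add: er c)
  finally show ?thesis .
qed

lemma nr6: "node_rep (gnn K) G i ! 3 = (\<Sum>j\<in>khop K G i. of_bool (adj G i j) * (\<Sum>k\<in>khop K G i. C.p6 j k))"
proof -
  have "node_rep (gnn K) G i ! 3 = (\<Sum>j\<in>khop K G i. of_bool (adj G i j) * (\<Sum>k\<in>khop K G i. qs (hfeat (gnn K) G i j (Suc (Suc (Suc 0))) k) ! 3))"
    by (rule nr) simp
  also have "\<dots> = (\<Sum>j\<in>khop K G i. of_bool (adj G i j) * (\<Sum>k\<in>khop K G i. C.p6 j k))"
    by (intro sum.cong refl arg_cong2[where f="(*)"]) (simp add: h3[OF wf iv K] qs_def q6_def C.p6_def)
  finally show ?thesis .
qed

lemma nr5: "node_rep (gnn K) G i ! 2 = (\<Sum>j\<in>khop K G i. of_bool (adj G i j) * (\<Sum>k\<in>khop K G i. C.p5 j k))"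
proof -
  have "node_rep (gnn K) G i ! 2 = (\<Sum>j\<in>khop K G i. of_bool (adj G i j) * (\<Sum>k\<in>khop K G i. qs (hfeat (gnn K) G i j (Suc (Suc (Suc 0))) k) ! 2))"
    by (rule nr) simp
  also have "\<dots> = (\<Sum>j\<in>khop K G i. of_bool (adj G i j) * (\<Sum>k\<in>khop K G i. C.p5 j k))"
    by (intro sum.cong refl arg_cong2[where f="(*)"]) (simp add: h3[OF wf iv K] qs_def  C.p5_def)
  finally show ?thesis .
qed

lemma nr4: "node_rep (gnn K) G i ! 1 = (\<Sum>j\<in>khop K G i. of_bool (adj G i j) * (\<Sum>k\<in>khop K G i. C.p4 j k))"
proof -
  have "node_rep (gnn K) G i ! 1 = (\<Sum>j\<in>khop K G i. of_bool (adj G i j) * (\<Sum>k\<in>khop K G i. qs (hfeat (gnn K) G i j (Suc (Suc (Suc 0))) k) ! 1))"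
    by (rule nr) simp
  also have "\<dots> = (\<Sum>j\<in>khop K G i. of_bool (adj G i j) * (\<Sum>k\<in>khop K G i. C.p4 j k))"
    by (intro sum.cong refl arg_cong2[where f="(*)"]) (simp add: h3[OF wf iv K] qs_def  C.p4_def)
  finally show ?thesis .
qed

lemma nr3: "node_rep (gnn K) G i ! 0 = (\<Sum>j\<in>khop K G i. of_bool (adj G i j) * (\<Sum>k\<in>khop K G i. C.p3 j k))"
proof -
  have "node_rep (gnn K) G i ! 0 = (\<Sum>j\<in>khop K G i. of_bool (adj G i j) * (\<Sum>k\<in>khop K G i. qs (hfeat (gnn K) G i j (Suc (Suc (Suc 0))) k) ! 0))"
    by (rule nr) simp
  also have "\<dots> = (\<Sum>j\<in>khop K G i. of_bool (adj G i j) * (\<Sum>k\<in>khop K G i. C.p3 j k))"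
    by (intro sum.cong refl arg_cong2[where f="(*)"]) (simp add: h3[OF wf iv K] qs_def  C.p3_def)
  finally show ?thesis .
qed

end


lemma rot_edges:
  assumes L: "0 < length vs" and n: "n < length vs"
  shows "cycle_edges (rotate n vs) = cycle_edges vs"
proof -
  let ?L = "length vs"
  have r: "rotate n vs ! k = vs ! ((n + k) mod ?L)" if "k < ?L" for k using that by (simp add: nth_rotate)
  have e: "{rotate n vs ! k, rotate n vs ! ((k + 1) mod ?L)} = {vs ! ((n + k) mod ?L), vs ! (((n + k) mod ?L + 1) mod ?L)}"
    if "k < ?L" for k
    using that L by (simp add: r mod_simps add.assoc)
  show ?thesis
  proof
    show "cycle_edges (rotate n vs) \<subseteq> cycle_edges vs"
      unfolding cycle_edges_def length_rotate
    proof (safe)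
      fix k assume k: "k < ?L"
      show "\<exists>k'. {rotate n vs ! k, rotate n vs ! ((k + 1) mod ?L)} = {vs ! k', vs ! ((k' + 1) mod ?L)} \<and> k' < ?L"
        using e[OF k] L by (intro exI[of _ "(n + k) mod ?L"]) auto
    qed
    show "cycle_edges vs \<subseteq> cycle_edges (rotate n vs)"
      unfolding cycle_edges_def length_rotate
    proof (safe)
      fix k assume k: "k < ?L"
      define k' where "k' = (k + ?L - n) mod ?L"
      have k'L: "k' < ?L" using L by (simp add: k'_def)
      have "(n + k') mod ?L = k"
      proof -
        have "(n + k') mod ?L = (n + (k + ?L - n)) mod ?L" by (simp add: k'_def mod_simps)
        also have "n + (k + ?L - n) = k + ?L" using n by simp
        finally show ?thesis using k by simp
      qed
      then show "\<exists>k'. {vs ! k, vs ! ((k + 1) mod ?L)} = {rotate n vs ! k', rotate n vs ! ((k' + 1) mod ?L)} \<and> k' < ?L"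
        using e[OF k'L] k'L by (intro exI[of _ k']) auto
    qed
  qed
qed

lemma rot_cycle:
  assumes c: "is_cycle L G vs" shows "is_cycle L G (rotate n vs)"
proof -
  have L: "length vs = L" "3 \<le> L" using c by (auto simp: is_cycle_def)
  have a: "\<forall>k<L. adj G (vs ! k) (vs ! ((k + 1) mod L))" using c by (simp add: is_cycle_def)
  have "adj G (rotate n vs ! k) (rotate n vs ! ((k + 1) mod L))" if "k < L" for k
  proof -
    have "rotate n vs ! k = vs ! ((n + k) mod L)" using that L by (simp add: nth_rotate)
    moreover have "rotate n vs ! ((k + 1) mod L) = vs ! (((n + k) mod L + 1) mod L)"
      using that L by (simp add: nth_rotate mod_simps add.assoc)
    ultimately show ?thesis using a L by simp
  qed
  then show ?thesis using c by (simp add: is_cycle_def)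
qed


definition rv :: "'v list \<Rightarrow> 'v list" where
  "rv vs = map (\<lambda>k. vs ! ((length vs - k) mod length vs)) [0..<length vs]"

lemma rv_len[simp]: "length (rv vs) = length vs" by (simp add: rv_def)
lemma rv_nth: "k < length vs \<Longrightarrow> rv vs ! k = vs ! ((length vs - k) mod length vs)" by (simp add: rv_def)

lemma rv_edges:
  assumes L: "0 < length vs"
  shows "cycle_edges (rv vs) = cycle_edges vs"
proof -
  let ?L = "length vs"
  have e: "{rv vs ! k, rv vs ! ((k + 1) mod ?L)} = {vs ! (?L - 1 - k), vs ! ((?L - 1 - k + 1) mod ?L)}"
    if "k < ?L" for k
  proof -
    have "rv vs ! ((k + 1) mod ?L) = vs ! (?L - 1 - k)"
    proof (cases "k + 1 < ?L")
      case True then show ?thesis by (simp add: rv_nth)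
    next
      case False then have "k + 1 = ?L" using that by simp
      then show ?thesis using L by (simp add: rv_nth)
    qed
    moreover have "rv vs ! k = vs ! ((?L - 1 - k + 1) mod ?L)" using that by (simp add: rv_nth Suc_diff_Suc)
    ultimately show ?thesis by auto
  qed
  show ?thesis
  proof
    show "cycle_edges (rv vs) \<subseteq> cycle_edges vs"
      unfolding cycle_edges_def rv_len
    proof (safe)
      fix k assume k: "k < ?L"
      show "\<exists>k'. {rv vs ! k, rv vs ! ((k + 1) mod ?L)} = {vs ! k', vs ! ((k' + 1) mod ?L)} \<and> k' < ?L"
        using e[OF k] L by (intro exI[of _ "?L - 1 - k"]) auto
    qed
    show "cycle_edges vs \<subseteq> cycle_edges (rv vs)"
      unfolding cycle_edges_def rv_len
    proof (safe)
      fix k assume k: "k < ?L"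
      have k'L: "?L - 1 - k < ?L" using k by simp
      have kk: "?L - 1 - (?L - 1 - k) = k" using k by simp
      show "\<exists>k'. {vs ! k, vs ! ((k + 1) mod ?L)} = {rv vs ! k', rv vs ! ((k' + 1) mod ?L)} \<and> k' < ?L"
        using e[OF k'L] k'L unfolding kk by (intro exI[of _ "?L - 1 - k"]) auto
    qed
  qed
qed

lemma rv_cycle:
  assumes c: "is_cycle L G vs" and sym: "\<And>u v. adj G u v \<Longrightarrow> adj G v u"
  shows "is_cycle L G (rv vs)"
proof -
  have L: "length vs = L" "3 \<le> L" "distinct vs" "set vs \<subseteq> verts G" using c by (auto simp: is_cycle_def)
  have a: "\<And>k. k < L \<Longrightarrow> adj G (vs ! k) (vs ! ((k + 1) mod L))" using c by (simp add: is_cycle_def)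
  have adj: "adj G (rv vs ! k) (rv vs ! ((k + 1) mod L))" if k: "k < L" for k
  proof -
    have 1: "rv vs ! ((k + 1) mod L) = vs ! (L - 1 - k)"
    proof (cases "k + 1 < L")
      case True then show ?thesis using L by (simp add: rv_nth)
    next
      case False then have "k + 1 = L" using that by simp
      then show ?thesis using L by (simp add: rv_nth)
    qed
    have 2: "rv vs ! k = vs ! ((L - 1 - k + 1) mod L)" using k L by (simp add: rv_nth Suc_diff_Suc)
    show ?thesis unfolding 1 2 using a[of "L - 1 - k"] k by (auto intro: sym)
  qed
  have g: "(L - x) mod L = (L - y) mod L \<Longrightarrow> x < L \<Longrightarrow> y < L \<Longrightarrow> x = y" for x y
    by (cases "x = 0"; cases "y = 0") auto
  have d: "distinct (rv vs)"
  proof (subst distinct_conv_nth, intro allI impI)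
    fix x y assume "x < length (rv vs)" "y < length (rv vs)" "x \<noteq> y"
    then have xy: "x < L" "y < L" "x \<noteq> y" using L by auto
    have ne: "(L - x) mod L \<noteq> (L - y) mod L" using g[OF _ xy(1,2)] xy(3) by blast
    have lt: "(L - x) mod L < L" "(L - y) mod L < L" using L by auto
    have "vs ! ((L - x) mod L) \<noteq> vs ! ((L - y) mod L)"
      using ne lt L(1,3) by (simp add: nth_eq_iff_index_eq)
    then show "rv vs ! x \<noteq> rv vs ! y" using xy L by (simp add: rv_nth)
  qed
  have s: "set (rv vs) \<subseteq> verts G"
  proof
    fix x assume "x \<in> set (rv vs)"
    then obtain k where "k < L" "x = vs ! ((L - k) mod L)" using L by (auto simp: rv_def)
    moreover have "(L - k) mod L < length vs" using L by simp
    ultimately show "x \<in> verts G" using L(4) nth_mem by blast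
  qed
  show ?thesis using adj d s L by (simp add: is_cycle_def)
qed

lemma cyc_nbr:
  assumes c: "is_cycle L G vs" and m: "m < L" and e: "{vs ! m, x} \<in> cycle_edges vs"
  shows "x = vs ! ((m + 1) mod L) \<or> x = vs ! ((m + L - 1) mod L)"
proof -
  have L: "length vs = L" "3 \<le> L" "distinct vs" using c by (auto simp: is_cycle_def)
  obtain k where k: "k < L" and ek: "{vs ! m, x} = {vs ! k, vs ! ((k + 1) mod L)}"
    using e L by (auto simp: cycle_edges_def)
  have kL: "(k + 1) mod L < L" using L by simp
  from ek have "(vs ! m = vs ! k \<and> x = vs ! ((k + 1) mod L)) \<or> (vs ! m = vs ! ((k + 1) mod L) \<and> x = vs ! k)"
    by (auto simp: doubleton_eq_iff)
  then show ?thesis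
  proof
    assume "vs ! m = vs ! k \<and> x = vs ! ((k + 1) mod L)"
    then show ?thesis using L m k by (simp add: nth_eq_iff_index_eq)
  next
    assume h: "vs ! m = vs ! ((k + 1) mod L) \<and> x = vs ! k"
    then have mk: "m = (k + 1) mod L" using L m kL by (simp add: nth_eq_iff_index_eq)
    have "(m + L - 1) mod L = k"
    proof (cases "k + 1 < L")
      case True then show ?thesis using mk by simp
    next
      case False then have "k + 1 = L" using k by simp
      then show ?thesis using mk by simp
    qed
    then show ?thesis using h by simp
  qed
qed

lemma cyc_uniq1:
  assumes cv: "is_cycle L G vs" and cw: "is_cycle L G ws" and E: "cycle_edges ws = cycle_edges vs"
    and h0: "ws ! 0 = vs ! 0" and h1: "ws ! 1 = vs ! 1"
  shows "ws = vs"
proof -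
  have L: "length vs = L" "length ws = L" "3 \<le> L" "distinct ws" using cv cw by (auto simp: is_cycle_def)
  have step: "k + 1 < L \<longrightarrow> ws ! k = vs ! k \<and> ws ! (k + 1) = vs ! (k + 1)" for k
  proof (induction k)
    case 0 then show ?case using h0 h1 by simp
  next
    case (Suc k)
    show ?case
    proof
      assume k: "Suc k + 1 < L"
      then have ih: "ws ! k = vs ! k" "ws ! (k + 1) = vs ! (k + 1)" using Suc by auto
      have "{ws ! (k + 1), ws ! ((k + 1 + 1) mod L)} \<in> cycle_edges ws"
        using L k unfolding cycle_edges_def by (intro CollectI exI[of _ "k + 1"]) auto
      then have "{vs ! (k + 1), ws ! (k + 2)} \<in> cycle_edges vs" using E ih k by simp
      from cyc_nbr[OF cv _ this] k
      have "ws ! (k + 2) = vs ! (k + 2) \<or> ws ! (k + 2) = vs ! k" by simp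
      moreover have "ws ! (k + 2) \<noteq> ws ! k" using L k by (simp add: nth_eq_iff_index_eq)
      ultimately show "ws ! Suc k = vs ! Suc k \<and> ws ! (Suc k + 1) = vs ! (Suc k + 1)" using ih by auto
    qed
  qed
  show ?thesis
  proof (rule nth_equalityI)
    show "length ws = length vs" using L by simp
    fix k assume "k < length ws"
    then show "ws ! k = vs ! k" using step[of k] step[of "k - 1"] L
      by (cases "k + 1 < L") auto
  qed
qed

lemma cyc_uniq:
  assumes cv: "is_cycle L G vs" and cw: "is_cycle L G ws" and E: "cycle_edges ws = cycle_edges vs"
    and h0: "ws ! 0 = vs ! 0" and sym: "\<And>u v. adj G u v \<Longrightarrow> adj G v u"
  shows "ws = vs \<or> ws = rv vs"
proof -
  have L: "length vs = L" "length ws = L" "3 \<le> L" using cv cw by (auto simp: is_cycle_def)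
  have "{ws ! 0, ws ! ((0 + 1) mod L)} \<in> cycle_edges ws"
    using L unfolding cycle_edges_def by (intro CollectI exI[of _ 0]) auto
  then have "{vs ! 0, ws ! 1} \<in> cycle_edges vs" using E h0 L by simp
  from cyc_nbr[OF cv _ this] L
  have "ws ! 1 = vs ! 1 \<or> ws ! 1 = vs ! (L - 1)" by simp
  then show ?thesis
  proof
    assume "ws ! 1 = vs ! 1" then show ?thesis using cyc_uniq1[OF cv cw E h0] by simp
  next
    assume w1: "ws ! 1 = vs ! (L - 1)"
    have "ws = rv vs"
    proof (rule cyc_uniq1[OF rv_cycle[OF cv sym] cw])
      have "cycle_edges (rv vs) = cycle_edges vs" using L by (intro rv_edges) simp
      then show "cycle_edges ws = cycle_edges (rv vs)" using E by simp
      show "ws ! 0 = rv vs ! 0" using h0 L by (simp add: rv_nth)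
      show "ws ! 1 = rv vs ! 1" using w1 L by (simp add: rv_nth)
    qed
    then show ?thesis by simp
  qed
qed


lemma count2:
  assumes fin: "finite (verts G)" and sym: "\<And>u v. adj G u v \<Longrightarrow> adj G v u"
  shows "card {vs. is_cycle L G vs \<and> vs ! 0 = i} = 2 * cycle_count L G i"
proof -
  define A where "A = {vs. is_cycle L G vs \<and> vs ! 0 = i}"
  define B where "B = {cycle_edges vs | vs. is_cycle L G vs \<and> i \<in> set vs}"
  define fib where "fib e = {vs \<in> A. cycle_edges vs = e}" for e
  have finL: "finite {vs. is_cycle L G vs}"
    by (rule finite_subset[OF _ finite_lists_length_eq[OF fin, of L]]) (auto simp: is_cycle_def)
  have finA: "finite A" unfolding A_def by (rule finite_subset[OF _ finL]) auto
  have finB: "finite B"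
  proof -
    have "B = cycle_edges ` {vs. is_cycle L G vs \<and> i \<in> set vs}" by (auto simp: B_def)
    then show ?thesis using finL by (auto intro: finite_subset)
  qed
  have AU: "A = \<Union> (fib ` B)"
  proof
    show "A \<subseteq> \<Union> (fib ` B)"
    proof
      fix vs assume v: "vs \<in> A"
      then have "i \<in> set vs" by (auto simp: A_def is_cycle_def intro!: nth_mem)
      then have "cycle_edges vs \<in> B" using v by (auto simp: A_def B_def)
      then show "vs \<in> \<Union> (fib ` B)" using v by (auto simp: fib_def)
    qed
    show "\<Union> (fib ` B) \<subseteq> A" by (auto simp: fib_def)
  qed
  have c2: "card (fib e) = 2" if e: "e \<in> B" for e
  proof -
    obtain vs0 where c0: "is_cycle L G vs0" and i0: "i \<in> set vs0" and e0: "e = cycle_edges vs0"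
      using e by (auto simp: B_def)
    have L: "length vs0 = L" "3 \<le> L" using c0 by (auto simp: is_cycle_def)
    obtain p where p: "p < L" "vs0 ! p = i" using i0 L by (auto simp: in_set_conv_nth)
    define v where "v = rotate p vs0"
    have cv: "is_cycle L G v" unfolding v_def by (rule rot_cycle[OF c0])
    have v0: "v ! 0 = i" using p L by (simp add: v_def nth_rotate)
    have ev: "cycle_edges v = e" using p L e0 by (simp add: v_def rot_edges)
    have Lv: "length v = L" "distinct v" using cv by (auto simp: is_cycle_def)
    have crv: "is_cycle L G (rv v)" by (rule rv_cycle[OF cv sym])
    have rv0: "rv v ! 0 = i" using v0 Lv L by (simp add: rv_nth)
    have erv: "cycle_edges (rv v) = e" using ev Lv L by (simp add: rv_edges)
    have ne: "v \<noteq> rv v"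
    proof
      assume "v = rv v"
      then have "v ! 1 = rv v ! 1" by simp
      also have "\<dots> = v ! (L - 1)" using Lv L by (simp add: rv_nth)
      finally show False using Lv L by (simp add: nth_eq_iff_index_eq)
    qed
    have "fib e = {v, rv v}"
    proof
      show "fib e \<subseteq> {v, rv v}"
      proof
        fix ws assume "ws \<in> fib e"
        then have "is_cycle L G ws" "ws ! 0 = v ! 0" "cycle_edges ws = cycle_edges v"
          using v0 ev by (auto simp: fib_def A_def)
        then show "ws \<in> {v, rv v}" using cyc_uniq[OF cv _ _ _ sym] by auto
      qed
      show "{v, rv v} \<subseteq> fib e" using cv v0 ev crv rv0 erv by (auto simp: fib_def A_def)
    qed
    then show ?thesis using ne by simp
  qed
  have "card A = (\<Sum>e\<in>B. card (fib e))"
    unfolding AU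
    by (rule card_UN_disjoint[OF finB]) (auto simp: fib_def intro: finite_subset[OF _ finA])
  also have "\<dots> = 2 * card B" using c2 by simp
  finally show ?thesis by (simp add: A_def B_def cycle_count_def)
qed


lemma all6: "(\<forall>k<6. P k) \<longleftrightarrow> P 0 \<and> P 1 \<and> P 2 \<and> P 3 \<and> P 4 \<and> P (5::nat)"
  by (simp add: eval_nat_numeral All_less_Suc conj_ac)

lemma isc6: "is_cycle 6 G [x0, x1, x2, x3, x4, x5] \<longleftrightarrow>
   distinct [x0, x1, x2, x3, x4, x5] \<and> {x0, x1, x2, x3, x4, x5} \<subseteq> verts G \<and>
   adj G x0 x1 \<and> adj G x1 x2 \<and> adj G x2 x3 \<and> adj G x3 x4 \<and> adj G x4 x5 \<and> adj G x5 x0"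
  unfolding is_cycle_def all6 by simp


lemma all3: "(\<forall>k<3. P k) \<longleftrightarrow> P 0 \<and> P 1 \<and> P (2::nat)"
  by (simp add: eval_nat_numeral All_less_Suc conj_ac)

lemma isc3: "is_cycle 3 G [x0, x1, x2] \<longleftrightarrow>
   distinct [x0, x1, x2] \<and> {x0, x1, x2} \<subseteq> verts G \<and> adj G x0 x1 \<and> adj G x1 x2 \<and> adj G x2 x0"
  unfolding is_cycle_def all3 by simp

lemma all4: "(\<forall>k<4. P k) \<longleftrightarrow> P 0 \<and> P 1 \<and> P 2 \<and> P (3::nat)"
  by (simp add: eval_nat_numeral All_less_Suc conj_ac)

lemma isc4: "is_cycle 4 G [x0, x1, x2, x3] \<longleftrightarrow>
   distinct [x0, x1, x2, x3] \<and> {x0, x1, x2, x3} \<subseteq> verts G \<and> adj G x0 x1 \<and> adj G x1 x2 \<and> adj G x2 x3 \<and> adj G x3 x0"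
  unfolding is_cycle_def all4 by simp

lemma all5: "(\<forall>k<5. P k) \<longleftrightarrow> P 0 \<and> P 1 \<and> P 2 \<and> P 3 \<and> P (4::nat)"
  by (simp add: eval_nat_numeral All_less_Suc conj_ac)

lemma isc5: "is_cycle 5 G [x0, x1, x2, x3, x4] \<longleftrightarrow>
   distinct [x0, x1, x2, x3, x4] \<and> {x0, x1, x2, x3, x4} \<subseteq> verts G \<and> adj G x0 x1 \<and> adj G x1 x2 \<and> adj G x2 x3 \<and> adj G x3 x4 \<and> adj G x4 x0"
  unfolding is_cycle_def all5 by simp

lemma card_filter_sum: "finite U \<Longrightarrow> real (card {p\<in>U. Q p}) = (\<Sum>p\<in>U. of_bool (Q p))"
proof -
  assume f: "finite U"
  have "real (card {p\<in>U. Q p}) = (\<Sum>p\<in>{p\<in>U. Q p}. 1)" by simp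
  also have "\<dots> = (\<Sum>p\<in>U. if Q p then 1 else 0)" using f by (rule sum.inter_filter)
  also have "\<dots> = (\<Sum>p\<in>U. of_bool (Q p))" by (rule sum.cong) auto
  finally show ?thesis .
qed

lemma sum_prod': "sum h (A \<times> B) = (\<Sum>x\<in>A. \<Sum>y\<in>B. h (x, y))"
  by (simp add: sum.cartesian_product)

lemma card_img: "inj_on f T \<Longrightarrow> A = f ` T \<Longrightarrow> card A = card T"
  by (simp add: card_image)

context
  fixes G :: "('v, 'z) graph_scheme" and i :: 'v and K :: nat
  assumes wf: "wf_graph G" and iv: "i \<in> verts G" and K: "card (edge_rel G) \<le> K"
begin

interpretation C: cg "khop K G i" "adj G" i by (rule khop_cg[OF wf iv K])

lemma Vsub: "khop K G i \<subseteq> verts G" by (rule khop_cg(2)[OF wf iv K])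

lemma A6: "real (card {vs. is_cycle 6 G vs \<and> vs ! 0 = i}) =
  (\<Sum>j\<in>khop K G i. \<Sum>a\<in>khop K G i. \<Sum>b\<in>khop K G i. \<Sum>c\<in>khop K G i. \<Sum>d\<in>khop K G i.
     of_bool (C.M6 j a b c d \<and> a \<noteq> c \<and> b \<noteq> d \<and> a \<noteq> d))"
proof -
  let ?V = "khop K G i"
  define Q where "Q = (\<lambda>(j, a, b, c, d). C.M6 j a b c d \<and> a \<noteq> c \<and> b \<noteq> d \<and> a \<noteq> d)"
  define T where "T = {p \<in> ?V \<times> ?V \<times> ?V \<times> ?V \<times> ?V. Q p}"
  define f where "f = (\<lambda>(j::'v, a::'v, b::'v, c::'v, d::'v). [i, j, a, b, c, d])"
  have inj: "inj_on f T" by (auto simp: inj_on_def f_def)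
  have eq: "{vs. is_cycle 6 G vs \<and> vs ! 0 = i} = f ` T"
  proof
    show "{vs. is_cycle 6 G vs \<and> vs ! 0 = i} \<subseteq> f ` T"
    proof (rule subsetI)
      fix vs assume "vs \<in> {vs. is_cycle 6 G vs \<and> vs ! 0 = i}"
      then have c: "is_cycle 6 G vs" and v0: "vs ! 0 = i" by auto
      then have "length vs = 6" by (simp add: is_cycle_def)
      then obtain x0 x1 x2 x3 x4 x5 where vs: "vs = [x0, x1, x2, x3, x4, x5]"
        by (auto simp: eval_nat_numeral length_Suc_conv)
      have x0: "x0 = i" using v0 vs by simp
      have cc: "distinct [i, x1, x2, x3, x4, x5]" "adj G i x1" "adj G x1 x2" "adj G x2 x3" "adj G x3 x4" "adj G x4 x5" "adj G x5 i"
        using c unfolding vs x0 isc6 by auto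
      have inV: "x1 \<in> ?V" "x2 \<in> ?V" "x3 \<in> ?V" "x4 \<in> ?V" "x5 \<in> ?V"
        using C.clo C.iV cc by blast+
      have "(x1, x2, x3, x4, x5) \<in> T"
        using inV cc by (auto simp: T_def Q_def C.M6_def)
      then show "vs \<in> f ` T" unfolding vs x0 f_def by force
    qed
    show "f ` T \<subseteq> {vs. is_cycle 6 G vs \<and> vs ! 0 = i}"
    proof safe
      fix j a b c d assume "(j, a, b, c, d) \<in> T"
      then have h: "j \<in> ?V" "a \<in> ?V" "b \<in> ?V" "c \<in> ?V" "d \<in> ?V" "C.M6 j a b c d" "a \<noteq> c" "b \<noteq> d" "a \<noteq> d"
        by (auto simp: T_def Q_def)
      have "is_cycle 6 G [i, j, a, b, c, d]"
        unfolding isc6 using h Vsub C.iV iv C.irr C.sym unfolding C.M6_def by auto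
      then show "is_cycle 6 G (f (j, a, b, c, d))" "f (j, a, b, c, d) ! 0 = i" by (auto simp: f_def)
    qed
  qed
  have "real (card {vs. is_cycle 6 G vs \<and> vs ! 0 = i}) = real (card T)" using card_img[OF inj eq] by simp
  also have "\<dots> = (\<Sum>p\<in>?V \<times> ?V \<times> ?V \<times> ?V \<times> ?V. of_bool (Q p))"
    unfolding T_def using C.fin by (intro card_filter_sum) auto
  also have "\<dots> = (\<Sum>j\<in>?V. \<Sum>a\<in>?V. \<Sum>b\<in>?V. \<Sum>c\<in>?V. \<Sum>d\<in>?V. of_bool (C.M6 j a b c d \<and> a \<noteq> c \<and> b \<noteq> d \<and> a \<noteq> d))"
    by (simp only: sum_prod') (simp add: Q_def)
  finally show ?thesis .
qed

lemma A5: "real (card {vs. is_cycle 5 G vs \<and> vs ! 0 = i}) =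
  (\<Sum>j\<in>khop K G i. \<Sum>a\<in>khop K G i. \<Sum>b\<in>khop K G i. \<Sum>c\<in>khop K G i.
     of_bool (C.M5 j a b c \<and> a \<noteq> c))"
proof -
  let ?V = "khop K G i"
  define Q where "Q = (\<lambda>(j, a, b, c). C.M5 j a b c \<and> a \<noteq> c)"
  define T where "T = {p \<in> ?V \<times> ?V \<times> ?V \<times> ?V. Q p}"
  define f where "f = (\<lambda>(j::'v, a::'v, b::'v, c::'v). [i, j, a, b, c])"
  have inj: "inj_on f T" by (auto simp: inj_on_def f_def)
  have eq: "{vs. is_cycle 5 G vs \<and> vs ! 0 = i} = f ` T"
  proof
    show "{vs. is_cycle 5 G vs \<and> vs ! 0 = i} \<subseteq> f ` T"
    proof (rule subsetI)
      fix vs assume "vs \<in> {vs. is_cycle 5 G vs \<and> vs ! 0 = i}"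
      then have c: "is_cycle 5 G vs" and v0: "vs ! 0 = i" by auto
      then have "length vs = 5" by (simp add: is_cycle_def)
      then obtain x0 x1 x2 x3 x4 where vs: "vs = [x0, x1, x2, x3, x4]"
        by (auto simp: eval_nat_numeral length_Suc_conv)
      have x0: "x0 = i" using v0 vs by simp
      have cc: "distinct [i, x1, x2, x3, x4]" "adj G i x1" "adj G x1 x2" "adj G x2 x3" "adj G x3 x4" "adj G x4 i"
        using c unfolding vs x0 isc5 by auto
      have inV: "x1 \<in> ?V" "x2 \<in> ?V" "x3 \<in> ?V" "x4 \<in> ?V"
        using C.clo C.iV cc by blast+
      have "(x1, x2, x3, x4) \<in> T"
        using inV cc by (auto simp: T_def Q_def C.M5_def)
      then show "vs \<in> f ` T" unfolding vs x0 f_def by force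
    qed
    show "f ` T \<subseteq> {vs. is_cycle 5 G vs \<and> vs ! 0 = i}"
    proof safe
      fix j a b c assume "(j, a, b, c) \<in> T"
      then have h: "j \<in> ?V" "a \<in> ?V" "b \<in> ?V" "c \<in> ?V" "C.M5 j a b c \<and> a \<noteq> c"
        by (auto simp: T_def Q_def)
      have "is_cycle 5 G [i, j, a, b, c]"
        unfolding isc5 using h Vsub C.iV iv C.irr C.sym unfolding C.M5_def by auto
      then show "is_cycle 5 G (f (j, a, b, c))" "f (j, a, b, c) ! 0 = i" by (auto simp: f_def)
    qed
  qed
  have "real (card {vs. is_cycle 5 G vs \<and> vs ! 0 = i}) = real (card T)" using card_img[OF inj eq] by simp
  also have "\<dots> = (\<Sum>p\<in>?V \<times> ?V \<times> ?V \<times> ?V. of_bool (Q p))"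
    unfolding T_def using C.fin by (intro card_filter_sum) auto
  also have "\<dots> = (\<Sum>j\<in>?V. \<Sum>a\<in>?V. \<Sum>b\<in>?V. \<Sum>c\<in>?V. of_bool (C.M5 j a b c \<and> a \<noteq> c))"
    by (simp only: sum_prod') (simp add: Q_def)
  finally show ?thesis .
qed

lemma A4: "real (card {vs. is_cycle 4 G vs \<and> vs ! 0 = i}) =
  (\<Sum>j\<in>khop K G i. \<Sum>a\<in>khop K G i. \<Sum>b\<in>khop K G i.
     of_bool (adj G i j \<and> adj G j a \<and> a \<noteq> i \<and> adj G a b \<and> adj G b i \<and> b \<noteq> j))"
proof -
  let ?V = "khop K G i"
  define Q where "Q = (\<lambda>(j, a, b). adj G i j \<and> adj G j a \<and> a \<noteq> i \<and> adj G a b \<and> adj G b i \<and> b \<noteq> j)"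
  define T where "T = {p \<in> ?V \<times> ?V \<times> ?V. Q p}"
  define f where "f = (\<lambda>(j::'v, a::'v, b::'v). [i, j, a, b])"
  have inj: "inj_on f T" by (auto simp: inj_on_def f_def)
  have eq: "{vs. is_cycle 4 G vs \<and> vs ! 0 = i} = f ` T"
  proof
    show "{vs. is_cycle 4 G vs \<and> vs ! 0 = i} \<subseteq> f ` T"
    proof (rule subsetI)
      fix vs assume "vs \<in> {vs. is_cycle 4 G vs \<and> vs ! 0 = i}"
      then have c: "is_cycle 4 G vs" and v0: "vs ! 0 = i" by auto
      then have "length vs = 4" by (simp add: is_cycle_def)
      then obtain x0 x1 x2 x3 where vs: "vs = [x0, x1, x2, x3]"
        by (auto simp: eval_nat_numeral length_Suc_conv)
      have x0: "x0 = i" using v0 vs by simp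
      have cc: "distinct [i, x1, x2, x3]" "adj G i x1" "adj G x1 x2" "adj G x2 x3" "adj G x3 i"
        using c unfolding vs x0 isc4 by auto
      have inV: "x1 \<in> ?V" "x2 \<in> ?V" "x3 \<in> ?V"
        using C.clo C.iV cc by blast+
      have "(x1, x2, x3) \<in> T"
        using inV cc by (auto simp: T_def Q_def)
      then show "vs \<in> f ` T" unfolding vs x0 f_def by force
    qed
    show "f ` T \<subseteq> {vs. is_cycle 4 G vs \<and> vs ! 0 = i}"
    proof safe
      fix j a b assume "(j, a, b) \<in> T"
      then have h: "j \<in> ?V" "a \<in> ?V" "b \<in> ?V" "adj G i j \<and> adj G j a \<and> a \<noteq> i \<and> adj G a b \<and> adj G b i \<and> b \<noteq> j"
        by (auto simp: T_def Q_def)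
      have "is_cycle 4 G [i, j, a, b]"
        unfolding isc4 using h Vsub C.iV iv C.irr C.sym by auto
      then show "is_cycle 4 G (f (j, a, b))" "f (j, a, b) ! 0 = i" by (auto simp: f_def)
    qed
  qed
  have "real (card {vs. is_cycle 4 G vs \<and> vs ! 0 = i}) = real (card T)" using card_img[OF inj eq] by simp
  also have "\<dots> = (\<Sum>p\<in>?V \<times> ?V \<times> ?V. of_bool (Q p))"
    unfolding T_def using C.fin by (intro card_filter_sum) auto
  also have "\<dots> = (\<Sum>j\<in>?V. \<Sum>a\<in>?V. \<Sum>b\<in>?V. of_bool (adj G i j \<and> adj G j a \<and> a \<noteq> i \<and> adj G a b \<and> adj G b i \<and> b \<noteq> j))"
    by (simp only: sum_prod') (simp add: Q_def)
  finally show ?thesis .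
qed

lemma A3: "real (card {vs. is_cycle 3 G vs \<and> vs ! 0 = i}) =
  (\<Sum>j\<in>khop K G i. \<Sum>a\<in>khop K G i.
     of_bool (adj G i j \<and> adj G j a \<and> adj G a i))"
proof -
  let ?V = "khop K G i"
  define Q where "Q = (\<lambda>(j, a). adj G i j \<and> adj G j a \<and> adj G a i)"
  define T where "T = {p \<in> ?V \<times> ?V. Q p}"
  define f where "f = (\<lambda>(j::'v, a::'v). [i, j, a])"
  have inj: "inj_on f T" by (auto simp: inj_on_def f_def)
  have eq: "{vs. is_cycle 3 G vs \<and> vs ! 0 = i} = f ` T"
  proof
    show "{vs. is_cycle 3 G vs \<and> vs ! 0 = i} \<subseteq> f ` T"
    proof (rule subsetI)
      fix vs assume "vs \<in> {vs. is_cycle 3 G vs \<and> vs ! 0 = i}"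
      then have c: "is_cycle 3 G vs" and v0: "vs ! 0 = i" by auto
      then have "length vs = 3" by (simp add: is_cycle_def)
      then obtain x0 x1 x2 where vs: "vs = [x0, x1, x2]"
        by (auto simp: eval_nat_numeral length_Suc_conv)
      have x0: "x0 = i" using v0 vs by simp
      have cc: "distinct [i, x1, x2]" "adj G i x1" "adj G x1 x2" "adj G x2 i"
        using c unfolding vs x0 isc3 by auto
      have inV: "x1 \<in> ?V" "x2 \<in> ?V"
        using C.clo C.iV cc by blast+
      have "(x1, x2) \<in> T"
        using inV cc by (auto simp: T_def Q_def)
      then show "vs \<in> f ` T" unfolding vs x0 f_def by force
    qed
    show "f ` T \<subseteq> {vs. is_cycle 3 G vs \<and> vs ! 0 = i}"
    proof safe
      fix j a assume "(j, a) \<in> T"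
      then have h: "j \<in> ?V" "a \<in> ?V" "adj G i j \<and> adj G j a \<and> adj G a i"
        by (auto simp: T_def Q_def)
      have "is_cycle 3 G [i, j, a]"
        unfolding isc3 using h Vsub C.iV iv C.irr C.sym by auto
      then show "is_cycle 3 G (f (j, a))" "f (j, a) ! 0 = i" by (auto simp: f_def)
    qed
  qed
  have "real (card {vs. is_cycle 3 G vs \<and> vs ! 0 = i}) = real (card T)" using card_img[OF inj eq] by simp
  also have "\<dots> = (\<Sum>p\<in>?V \<times> ?V. of_bool (Q p))"
    unfolding T_def using C.fin by (intro card_filter_sum) auto
  also have "\<dots> = (\<Sum>j\<in>?V. \<Sum>a\<in>?V. of_bool (adj G i j \<and> adj G j a \<and> adj G a i))"
    by (simp only: sum_prod') (simp add: Q_def)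
  finally show ?thesis .
qed


lemma c2r: "real (card {vs. is_cycle L G vs \<and> vs ! 0 = i}) = 2 * real (cycle_count L G i)"
proof -
  have "finite (verts G)" "\<And>u v. adj G u v \<Longrightarrow> adj G v u" using wf by (auto simp: wf_graph_def)
  then show ?thesis using count2 by (metis of_nat_mult of_nat_numeral)
qed

lemma F6: "node_rep (gnn K) G i ! 3 = 2 * real (cycle_count 6 G i)"
  using nr6[OF wf iv K] C.L6 A6 c2r by simp
lemma F5: "node_rep (gnn K) G i ! 2 = 2 * real (cycle_count 5 G i)"
  using nr5[OF wf iv K] C.L5 A5 c2r by simp
lemma F4: "node_rep (gnn K) G i ! 1 = 2 * real (cycle_count 4 G i)"
  using nr4[OF wf iv K] C.L4 A4 c2r by simp
lemma F3: "node_rep (gnn K) G i ! 0 = 2 * real (cycle_count 3 G i)"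
  using nr3[OF wf iv K] C.L3 A3 c2r by simp

end

theorem theorem3:
  fixes G1 :: "'a graph" and G2 :: "'b graph" and i1 :: 'a and i2 :: 'b and L :: nat
  assumes "L \<in> {3, 4, 5, 6}"
    and "wf_graph G1" and "wf_graph G2"
    and "i1 \<in> verts G1" and "i2 \<in> verts G2"
    and "cycle_count L G1 i1 \<noteq> cycle_count L G2 i2"
  shows "\<exists>P. valid_i2gnn P \<and> node_rep P G1 i1 \<noteq> node_rep P G2 i2"
proof -
  define K where "K = card (edge_rel G1) + card (edge_rel G2) + 1"
  have K1: "card (edge_rel G1) \<le> K" and K2: "card (edge_rel G2) \<le> K" and K0: "1 \<le> K"
    by (auto simp: K_def)
  have "node_rep (gnn K) G1 i1 \<noteq> node_rep (gnn K) G2 i2"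
  proof
    assume eq: "node_rep (gnn K) G1 i1 = node_rep (gnn K) G2 i2"
    have "real (cycle_count L G1 i1) = real (cycle_count L G2 i2)"
      using assms(1)
    proof (elim insertE)
      assume "L = 3" then show ?thesis using eq F3[OF assms(2,4) K1] F3[OF assms(3,5) K2] by simp
    next
      assume "L = 4" then show ?thesis using eq F4[OF assms(2,4) K1] F4[OF assms(3,5) K2] by simp
    next
      assume "L = 5" then show ?thesis using eq F5[OF assms(2,4) K1] F5[OF assms(3,5) K2] by simp
    next
      assume "L = 6" then show ?thesis using eq F6[OF assms(2,4) K1] F6[OF assms(3,5) K2] by simp
    qed simp
    then show False using assms(6) by simp
  qed
  then show ?thesis using valid_gnn[OF K0] by blast
qed


end
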